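(* Let $\nu$ be a compactly supported measure on $\mathbb R$ that is finite on compact subsets of $\mathbb R\setminus\{0\}$. Then $\int|x|\nu(dx)<\infty$ if and only if $\int_1^\infty\frac{ds}{s^2}\int\nu(dx)(1-\cos(sx))<\infty$. *)

theory Defs
  imports "HOL-Analysis.Analysis"
begin

end

theory Submission
  imports Defs
begin

definition GG :: "real \<Rightarrow> ennreal" where
  "GG a = (\<integral>\<^sup>+ t. ennreal ((1 - cos t) / t\<^sup>2) * indicator {a..} t \<partial>lborel)"

lemma one_minus_cos_le: "1 - cos (t::real) \<le> t\<^sup>2 / 2"
proof -
  have "cos t = cos (2 * (t/2))" by simp
  also have "\<dots> = 1 - 2 * (sin (t/2))\<^sup>2" using cos_double[of "t/2"] cos_squared_eq[of "t/2"] by simp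
  finally have e: "1 - cos t = 2 * (sin (t/2))\<^sup>2" by simp
  have "\<bar>sin (t/2)\<bar> \<le> \<bar>t/2\<bar>" by (rule abs_sin_x_le_abs_x)
  hence "(sin (t/2))\<^sup>2 \<le> (t/2)\<^sup>2" by (metis abs_le_square_iff)
  thus ?thesis using e by (simp add: power_divide)
qed

lemma GG_mono: "a \<le> b \<Longrightarrow> GG b \<le> GG a"
  unfolding GG_def by (intro nn_integral_mono) (auto simp: indicator_def)

lemma GG0_finite: "GG 0 < \<infinity>"
proof -
  have le: "ennreal ((1 - cos t) / t\<^sup>2) * indicator {0..} t
      \<le> ennreal (1/2) * indicator {0..1} t + ennreal 2 * ennreal (indicator {1..} t * t powr -2)" for t :: real
  proof (cases "t \<ge> 0")
    case False thus ?thesis by simp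
  next
    case t: True
    show ?thesis
    proof (cases "t \<le> 1")
      case True
      have "(1 - cos t) / t\<^sup>2 \<le> 1/2"
      proof (cases "t = 0")
        case False
        with one_minus_cos_le[of t] show ?thesis by (simp add: divide_le_eq)
      qed simp
      hence "ennreal ((1 - cos t) / t\<^sup>2) \<le> ennreal (1/2)" by (rule ennreal_leI)
      with True t show ?thesis by (simp add: add_increasing2)
    next
      case False
      have "(1 - cos t) / t\<^sup>2 \<le> 2 * t powr -2"
      proof -
        have "1 - cos t \<le> 2" using cos_ge_minus_one[of t] by linarith
        moreover have "t powr -2 = 1 / t\<^sup>2" using False
          by (simp add: powr_minus powr_numeral divide_inverse)
        ultimately show ?thesis using False by (simp add: divide_right_mono)
      qed
      hence "ennreal ((1 - cos t) / t\<^sup>2) \<le> ennreal (2 * t powr -2)" by (rule ennreal_leI)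
      hence "ennreal ((1 - cos t) / t\<^sup>2) \<le> ennreal 2 * ennreal (t powr -2)"
        by (simp add: ennreal_mult)
      with False t show ?thesis by (simp add: add_increasing)
    qed
  qed
  have "GG 0 \<le> (\<integral>\<^sup>+ t. ennreal (1/2) * indicator {0..1} t + ennreal 2 * ennreal (indicator {1..} t * t powr -2) \<partial>lborel)"
    unfolding GG_def by (rule nn_integral_mono) (rule le)
  also have "\<dots> = (\<integral>\<^sup>+ t. ennreal (1/2) * indicator {0..1::real} t \<partial>lborel) + (\<integral>\<^sup>+ t. ennreal 2 * ennreal (indicator {1..} t * t powr -2) \<partial>lborel)"
    by (rule nn_integral_add[of "\<lambda>t. ennreal (1/2) * indicator {0..1} t" lborel "\<lambda>t. ennreal 2 * ennreal (indicator {1..} t * t powr -2)"]) auto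
  also have "(\<integral>\<^sup>+ t. ennreal (1/2) * indicator {0..1::real} t \<partial>lborel) = ennreal (1/2)"
    by (simp add: nn_integral_cmult)
  also have "(\<integral>\<^sup>+ t. ennreal 2 * ennreal (indicator {1..} t * t powr -2) \<partial>lborel) = ennreal 2 * (\<integral>\<^sup>+ t. ennreal (indicator {1..} t * t powr -2) \<partial>lborel)"
    by (rule nn_integral_cmult) auto
  also have "(\<integral>\<^sup>+ t. ennreal (indicator {1..} t * t powr -2) \<partial>lborel) = ennreal 1"
  proof -
    have "((\<lambda>x::real. x powr -2) has_integral (-(1 powr (-2+1)) / (-2+1))) {1..}"
      by (rule has_integral_powr_to_inf) auto
    hence "((\<lambda>x::real. x powr -2) has_integral 1) {1..}" by simp
    from nn_integral_has_integral_lebesgue[OF _ this] show ?thesis by simp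
  qed
  finally have le2: "GG 0 \<le> ennreal (1/2) + ennreal 2 * ennreal 1" .
  have "ennreal (1/2) + ennreal 2 * ennreal 1 < \<infinity>"
    by (simp add: less_top[symmetric] ennreal_add_eq_top ennreal_mult_eq_top_iff)
  with le2 show ?thesis by (rule le_less_trans)
qed

lemma GG_pos: "GG R \<noteq> 0"
proof -
  obtain n :: nat where n: "real n \<ge> R" using real_arch_simple by blast
  define a where "a = 2 * real n * pi + pi/2"
  have "real n * 1 \<le> real n * (2 * pi)" using pi_gt3 by (intro mult_left_mono) auto
  hence "real n \<le> 2 * real n * pi" by simp
  hence aR: "a \<ge> R" unfolding a_def using n pi_gt_zero by linarith
  have a0: "a > 0" unfolding a_def using pi_gt_zero by (simp add: add_nonneg_pos)
  have bound: "ennreal (1 / (a + pi)\<^sup>2) * indicator {a..a+pi/2} t \<le> ennreal ((1 - cos t) / t\<^sup>2) * indicator {R..} t" for t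
  proof (cases "t \<in> {a..a+pi/2}")
    case True
    define z where "z = t - a"
    have z: "0 \<le> z" "z \<le> pi" using True pi_gt_zero unfolding z_def by auto
    have "cos t = cos (2 * real n * pi + (pi/2 + z))" unfolding z_def a_def by simp
    also have "\<dots> = cos (pi/2 + z)" by (simp add: cos_add)
    also have "\<dots> = - sin z" by (simp add: cos_add)
    finally have "cos t \<le> 0" using sin_ge_zero[OF z] by simp
    hence c1: "1 \<le> 1 - cos t" by simp
    have t0: "0 < t" "t \<le> a + pi" using True a0 pi_gt_zero by auto
    have "1 / (a + pi)\<^sup>2 \<le> 1 / t\<^sup>2"
      using t0 by (intro divide_left_mono power_mono mult_pos_pos) auto
    also have "\<dots> \<le> (1 - cos t) / t\<^sup>2" using c1 t0 by (intro divide_right_mono) auto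
    finally have "ennreal (1 / (a + pi)\<^sup>2) \<le> ennreal ((1 - cos t) / t\<^sup>2)" by (rule ennreal_leI)
    moreover have "t \<in> {R..}" using True aR by auto
    ultimately show ?thesis using True by simp
  qed simp
  have "a + pi > 0" using a0 pi_gt_zero by linarith
  hence "0 < 1 / (a + pi)\<^sup>2 * (pi/2)" using pi_gt_zero by (intro mult_pos_pos) auto
  moreover have "ennreal (1 / (a + pi)\<^sup>2) * ennreal (pi/2) = ennreal (1 / (a + pi)\<^sup>2 * (pi/2))"
    using pi_gt_zero by (intro ennreal_mult[symmetric]) auto
  ultimately have "0 < ennreal (1 / (a + pi)\<^sup>2) * ennreal (pi/2)" by (simp only: ennreal_less_zero_iff)
  also have "\<dots> = (\<integral>\<^sup>+ t. ennreal (1 / (a + pi)\<^sup>2) * indicator {a..a+pi/2} t \<partial>lborel)"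
    using pi_gt_zero by (simp add: nn_integral_cmult)
  also have "\<dots> \<le> GG R" unfolding GG_def by (intro nn_integral_mono bound)
  finally show ?thesis by simp
qed

lemma inner:
  fixes x :: real assumes x: "x \<noteq> 0"
  shows "(\<integral>\<^sup>+ s. ennreal (1 / s\<^sup>2) * ennreal (1 - cos (s * x)) * indicator {1..} s \<partial>lborel) = ennreal \<bar>x\<bar> * GG \<bar>x\<bar>"
proof -
  let ?f = "\<lambda>s::real. ennreal (1 / s\<^sup>2) * ennreal (1 - cos (s * x)) * indicator {1..} s"
  have c: "1 / \<bar>x\<bar> \<noteq> 0" using x by simp
  have "(\<integral>\<^sup>+ s. ?f s \<partial>lborel) = \<bar>1 / \<bar>x\<bar>\<bar> * (\<integral>\<^sup>+ u. ?f (0 + (1 / \<bar>x\<bar>) * u) \<partial>lborel)"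
    by (rule nn_integral_real_affine[OF _ c]) measurable
  also have "(\<lambda>u. ?f (0 + (1 / \<bar>x\<bar>) * u)) = (\<lambda>u. ennreal (x\<^sup>2) * (ennreal ((1 - cos u) / u\<^sup>2) * indicator {\<bar>x\<bar>..} u))"
  proof
    fix u :: real
    have cu: "cos (1 / \<bar>x\<bar> * u * x) = cos u"
    proof (cases "x > 0")
      case True thus ?thesis by simp
    next
      case False
      hence "1 / \<bar>x\<bar> * u * x = - u" using x by (simp add: field_simps)
      thus ?thesis by simp
    qed
    have ind: "(indicator {1..} (1 / \<bar>x\<bar> * u) :: ennreal) = indicator {\<bar>x\<bar>..} u"
      using x by (simp add: indicator_def field_simps)
    have r: "1 / (1 / \<bar>x\<bar> * u)\<^sup>2 = x\<^sup>2 * (1 / u\<^sup>2)"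
      by (cases "u = 0") (simp_all add: field_simps power_divide)
    have "ennreal (1 / (1 / \<bar>x\<bar> * u)\<^sup>2) * ennreal (1 - cos (1 / \<bar>x\<bar> * u * x))
        = ennreal (x\<^sup>2) * ennreal ((1 - cos u) / u\<^sup>2)"
      unfolding r cu by (simp add: ennreal_mult[symmetric] divide_inverse mult_ac)
    thus "?f (0 + (1 / \<bar>x\<bar>) * u) = ennreal (x\<^sup>2) * (ennreal ((1 - cos u) / u\<^sup>2) * indicator {\<bar>x\<bar>..} u)"
      using ind by (simp add: mult_ac)
  qed
  also have "(\<integral>\<^sup>+ u. ennreal (x\<^sup>2) * (ennreal ((1 - cos u) / u\<^sup>2) * indicator {\<bar>x\<bar>..} u) \<partial>lborel)
      = ennreal (x\<^sup>2) * GG \<bar>x\<bar>"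
    unfolding GG_def by (rule nn_integral_cmult) measurable
  also have "ennreal \<bar>1 / \<bar>x\<bar>\<bar> * (ennreal (x\<^sup>2) * GG \<bar>x\<bar>) = ennreal \<bar>x\<bar> * GG \<bar>x\<bar>"
  proof -
    have "ennreal \<bar>1 / \<bar>x\<bar>\<bar> * ennreal (x\<^sup>2) = ennreal \<bar>x\<bar>"
    proof -
      have y: "\<And>y::real. y > 0 \<Longrightarrow> \<bar>1 / y\<bar> * y\<^sup>2 = y" by (simp add: power2_eq_square)
      have "\<bar>1 / \<bar>x\<bar>\<bar> * \<bar>x\<bar>\<^sup>2 = \<bar>x\<bar>" using x by (intro y) simp
      hence "\<bar>1 / \<bar>x\<bar>\<bar> * x\<^sup>2 = \<bar>x\<bar>" by (simp only: power2_abs)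
      thus ?thesis by (simp add: ennreal_mult[symmetric])
    qed
    thus ?thesis by (simp add: mult.assoc[symmetric])
  qed
  finally show ?thesis .
qed


theorem proposition5p7:
  fixes \<nu> :: "real measure"
  assumes sets_nu: "sets \<nu> = sets borel"
    and compact_supp: "\<exists>K. compact K \<and> emeasure \<nu> (- K) = 0"
    and loc_finite: "\<And>K. compact K \<Longrightarrow> K \<subseteq> - {0} \<Longrightarrow> emeasure \<nu> K < \<infinity>"
  shows "(\<integral>\<^sup>+ x. ennreal \<bar>x\<bar> \<partial>\<nu>) < \<infinity> \<longleftrightarrow>
         (\<integral>\<^sup>+ s \<in> {1..}. ennreal (1 / s\<^sup>2) * (\<integral>\<^sup>+ x. ennreal (1 - cos (s * x)) \<partial>\<nu>) \<partial>lborel) < \<infinity>"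
proof -
  note [measurable_cong] = sets_nu
  obtain K where K: "compact K" "emeasure \<nu> (- K) = 0" using compact_supp by blast
  have Kb[measurable]: "K \<in> sets borel" using K(1) by (simp add: compact_imp_closed)
  obtain R where R: "R > 0" "\<And>x. x \<in> K \<Longrightarrow> \<bar>x\<bar> \<le> R"
    using compact_imp_bounded[OF K(1)] unfolding bounded_pos by auto
  have spnu: "space \<nu> = UNIV" using sets_eq_imp_space_eq[OF sets_nu] by simp
  have AE: "AE x in \<nu>. \<bar>x\<bar> \<le> R"
  proof (rule AE_I'[of "-K"])
    show "- K \<in> null_sets \<nu>" using K(2) by (intro null_setsI) (auto simp: sets_nu)
    show "{x \<in> space \<nu>. \<not> \<bar>x\<bar> \<le> R} \<subseteq> - K" using R(2) by auto
  qed
  define N where "N = density \<nu> (indicator (- {0}))"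
  have indm[measurable]: "(indicator (- {0}) :: real \<Rightarrow> ennreal) \<in> borel_measurable \<nu>" by measurable
  have sets_N[measurable_cong]: "sets N = sets borel" by (simp add: N_def sets_nu)
  have spN: "space N = UNIV" using sets_eq_imp_space_eq[OF sets_N] by simp
  have intN: "(\<integral>\<^sup>+ x. f x \<partial>N) = (\<integral>\<^sup>+ x. f x \<partial>\<nu>)"
    if f: "f \<in> borel_measurable \<nu>" and f0: "f 0 = 0" for f :: "real \<Rightarrow> ennreal"
    unfolding N_def using f f0
    by (subst nn_integral_density) (auto intro!: nn_integral_cong simp: indicator_def)
  have AEN: "AE x in N. \<bar>x\<bar> \<le> R"
    unfolding N_def using AE by (subst AE_density) (auto elim: AE_mp)
  have leN: "emeasure N B \<le> emeasure \<nu> B" if B: "B \<in> sets borel" for B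
  proof -
    have "emeasure N B = (\<integral>\<^sup>+ x. indicator (- {0}) x * indicator B x \<partial>\<nu>)"
      unfolding N_def using B by (intro emeasure_density) (auto simp: sets_nu)
    also have "\<dots> \<le> (\<integral>\<^sup>+ x. indicator B x \<partial>\<nu>)"
      by (intro nn_integral_mono) (auto simp: indicator_def)
    also have "\<dots> = emeasure \<nu> B" using B by (simp add: sets_nu)
    finally show ?thesis .
  qed
  have N0: "emeasure N {0} = 0"
  proof -
    have "emeasure N {0} = (\<integral>\<^sup>+ x. indicator (- {0}) x * indicator {0} x \<partial>\<nu>)"
      unfolding N_def by (intro emeasure_density) (auto simp: sets_nu)
    also have "\<dots> = (\<integral>\<^sup>+ x. 0 \<partial>\<nu>)" by (intro nn_integral_cong) (auto simp: indicator_def)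
    finally show ?thesis by simp
  qed
  have sfN: "sigma_finite_measure N"
  proof
    define A where "A = insert {0} (insert (- K) (range (\<lambda>n::nat. K \<inter> {x. 1 / real (Suc n) \<le> \<bar>x\<bar>})))"
    have cpt: "compact (K \<inter> {x::real. 1 / real (Suc n) \<le> \<bar>x\<bar>})" for n
      by (intro compact_Int_closed K(1) closed_Collect_le continuous_intros)
    have "countable A" unfolding A_def by simp
    moreover have "A \<subseteq> sets N" unfolding A_def sets_N using cpt
      by (auto intro: borel_closed compact_imp_closed)
    moreover have "\<Union> A = space N"
    proof -
      have "x \<in> \<Union> A" for x :: real
      proof (cases "x = 0 \<or> x \<notin> K")
        case True thus ?thesis unfolding A_def by auto
      next
        case False
        then obtain m where m: "m > 0" "inverse (real m) < \<bar>x\<bar>"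
          using ex_inverse_of_nat_less[of "\<bar>x\<bar>"] by auto
        then obtain n where "inverse (real (Suc n)) < \<bar>x\<bar>"
          by (metis Suc_pred)
        hence "x \<in> K \<inter> {x. 1 / real (Suc n) \<le> \<bar>x\<bar>}" using False by (simp add: divide_inverse less_imp_le)
        thus ?thesis unfolding A_def by blast
      qed
      thus ?thesis using spN by auto
    qed
    moreover have "\<forall>a\<in>A. emeasure N a \<noteq> \<infinity>"
    proof
      fix a assume "a \<in> A"
      then consider "a = {0}" | "a = - K" | n where "a = K \<inter> {x. 1 / real (Suc n) \<le> \<bar>x\<bar>}"
        unfolding A_def by auto
      thus "emeasure N a \<noteq> \<infinity>"
      proof cases
        case 1 thus ?thesis using N0 by simp
      next
        case 2
        have "emeasure N a \<le> emeasure \<nu> (- K)" using leN[of "- K"] 2 by auto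
        thus ?thesis using K(2) by (auto simp: top_unique)
      next
        case 3
        have sub: "a \<subseteq> - {0}" using 3 by auto
        have "emeasure N a \<le> emeasure \<nu> a" using 3 cpt[of n]
          by (intro leN) (auto intro: borel_closed compact_imp_closed)
        also have "\<dots> < \<infinity>" using loc_finite[OF _ sub] cpt[of n] 3 by simp
        finally show ?thesis by simp
      qed
    qed
    ultimately show "\<exists>A. countable A \<and> A \<subseteq> sets N \<and> \<Union> A = space N \<and> (\<forall>a\<in>A. emeasure N a \<noteq> \<infinity>)"
      by blast
  qed
  interpret P: pair_sigma_finite N lborel
    unfolding pair_sigma_finite_def using sfN lborel.sigma_finite_measure_axioms by simp
  define F where "F s x = ennreal (1 / s\<^sup>2) * ennreal (1 - cos (s * x)) * indicator {1..} s" for s x :: real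
  have Fm[measurable]: "(\<lambda>(x, s). F s x) \<in> borel_measurable (N \<Otimes>\<^sub>M lborel)"
    unfolding F_def by measurable
  have Fm2[measurable]: "F s \<in> borel_measurable \<nu>" for s unfolding F_def by measurable
  define g where "g x = (\<integral>\<^sup>+ s. F s x \<partial>lborel)" for x
  have F0: "F s 0 = 0" for s by (simp add: F_def)
  have "(\<integral>\<^sup>+ s \<in> {1..}. ennreal (1 / s\<^sup>2) * (\<integral>\<^sup>+ x. ennreal (1 - cos (s * x)) \<partial>\<nu>) \<partial>lborel)
      = (\<integral>\<^sup>+ s. (\<integral>\<^sup>+ x. F s x \<partial>\<nu>) \<partial>lborel)"
  proof (intro nn_integral_cong)
    fix s :: real
    have "(\<integral>\<^sup>+ x. F s x \<partial>\<nu>) = (\<integral>\<^sup>+ x. (ennreal (1 / s\<^sup>2) * indicator {1..} s) * ennreal (1 - cos (s * x)) \<partial>\<nu>)"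
      unfolding F_def by (intro nn_integral_cong) (simp add: mult_ac)
    also have "\<dots> = (ennreal (1 / s\<^sup>2) * indicator {1..} s) * (\<integral>\<^sup>+ x. ennreal (1 - cos (s * x)) \<partial>\<nu>)"
      by (rule nn_integral_cmult) measurable
    finally show "ennreal (1 / s\<^sup>2) * (\<integral>\<^sup>+ x. ennreal (1 - cos (s * x)) \<partial>\<nu>) * indicator {1..} s = (\<integral>\<^sup>+ x. F s x \<partial>\<nu>)"
      by (simp add: mult_ac)
  qed
  also have "\<dots> = (\<integral>\<^sup>+ s. (\<integral>\<^sup>+ x. F s x \<partial>N) \<partial>lborel)"
    by (intro nn_integral_cong intN[symmetric] Fm2 F0)
  also have "\<dots> = (\<integral>\<^sup>+ x. g x \<partial>N)"
    unfolding g_def by (rule P.Fubini'[of "\<lambda>x s. F s x"]) (use Fm in simp)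
  finally have eq: "(\<integral>\<^sup>+ s \<in> {1..}. ennreal (1 / s\<^sup>2) * (\<integral>\<^sup>+ x. ennreal (1 - cos (s * x)) \<partial>\<nu>) \<partial>lborel) = (\<integral>\<^sup>+ x. g x \<partial>N)" .
  have g_eq: "g x = ennreal \<bar>x\<bar> * GG \<bar>x\<bar>" if "x \<noteq> 0" for x
    unfolding g_def F_def using inner[OF that] by simp
  have g0: "g 0 = 0" unfolding g_def by (simp add: F0)
  have up: "g x \<le> ennreal \<bar>x\<bar> * GG 0" for x
    by (cases "x = 0") (auto simp: g0 g_eq intro!: mult_left_mono GG_mono)
  have lo: "ennreal \<bar>x\<bar> * GG R \<le> g x" if "\<bar>x\<bar> \<le> R" for x
    using that by (cases "x = 0") (auto simp: g0 g_eq intro!: mult_left_mono GG_mono)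
  have absN: "(\<integral>\<^sup>+ x. ennreal \<bar>x\<bar> \<partial>N) = (\<integral>\<^sup>+ x. ennreal \<bar>x\<bar> \<partial>\<nu>)"
    by (rule intN) auto
  have I1: "(\<integral>\<^sup>+ x. g x \<partial>N) \<le> (\<integral>\<^sup>+ x. ennreal \<bar>x\<bar> \<partial>\<nu>) * GG 0"
  proof -
    have "(\<integral>\<^sup>+ x. g x \<partial>N) \<le> (\<integral>\<^sup>+ x. ennreal \<bar>x\<bar> * GG 0 \<partial>N)"
      by (intro nn_integral_mono up)
    also have "\<dots> = (\<integral>\<^sup>+ x. ennreal \<bar>x\<bar> \<partial>N) * GG 0" by (rule nn_integral_multc) measurable
    finally show ?thesis using absN by simp
  qed
  have I2: "(\<integral>\<^sup>+ x. ennreal \<bar>x\<bar> \<partial>\<nu>) * GG R \<le> (\<integral>\<^sup>+ x. g x \<partial>N)"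
  proof -
    have "(\<integral>\<^sup>+ x. ennreal \<bar>x\<bar> \<partial>N) * GG R = (\<integral>\<^sup>+ x. ennreal \<bar>x\<bar> * GG R \<partial>N)"
      by (rule nn_integral_multc[symmetric]) measurable
    also have "\<dots> \<le> (\<integral>\<^sup>+ x. g x \<partial>N)"
      by (intro nn_integral_mono_AE) (use AEN lo in \<open>auto elim: AE_mp\<close>)
    finally show ?thesis using absN by simp
  qed
  have G0: "GG 0 < \<infinity>" by (rule GG0_finite)
  have GR: "GG R \<noteq> 0" by (rule GG_pos)
  show ?thesis unfolding eq
  proof
    assume "(\<integral>\<^sup>+ x. ennreal \<bar>x\<bar> \<partial>\<nu>) < \<infinity>"
    hence "(\<integral>\<^sup>+ x. ennreal \<bar>x\<bar> \<partial>\<nu>) * GG 0 < \<infinity>" using G0 by (simp add: ennreal_mult_less_top)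
    with I1 show "(\<integral>\<^sup>+ x. g x \<partial>N) < \<infinity>" by (rule le_less_trans)
  next
    assume "(\<integral>\<^sup>+ x. g x \<partial>N) < \<infinity>"
    with I2 have "(\<integral>\<^sup>+ x. ennreal \<bar>x\<bar> \<partial>\<nu>) * GG R < \<infinity>" by (rule le_less_trans)
    thus "(\<integral>\<^sup>+ x. ennreal \<bar>x\<bar> \<partial>\<nu>) < \<infinity>" using GR
      by (auto simp: ennreal_mult_less_top top_unique)
  qed
qed

end
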